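(* Every permutation $(a_1,a_2,a_3,\ldots)$ of the positive integers contains a 3-term arithmetic progression with odd common difference as a subsequence.
   Context: A permutation of the positive integers is a sequence $(a_1,a_2,\ldots)$ in which every positive integer appears exactly once. A sequence contains a $k$-term arithmetic progression with common difference $d\neq 0$ as a subsequence if there are indices $i_1<i_2<\cdots<i_k$ with $a_{i_{m+1}} - a_{i_m} = d$ for all $1\le m<k$. The difference $d$ may be positive or negative. *)

theory Defs
  imports Main
begin

text \<open>A permutation of the positive integers, indexed from 0: a bijection from nat onto {1..}.\<close>
definition perm_pos :: "(nat \<Rightarrow> nat) \<Rightarrow> bool" where
  "perm_pos a \<longleftrightarrow> bij_betw a UNIV {1..}"

definition has_AP_subseq :: "(nat \<Rightarrow> nat) \<Rightarrow> nat \<Rightarrow> int \<Rightarrow> bool" where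
  "has_AP_subseq a k d \<longleftrightarrow> d \<noteq> 0 \<and> (\<exists>idx :: nat \<Rightarrow> nat. strict_mono_on {..<k} idx \<and>
     (\<forall>m. m + 1 < k \<longrightarrow> int (a (idx (m + 1))) - int (a (idx m)) = d))"

end

theory Submission
  imports Defs
begin

lemma ap3:
  assumes "p < i" "i < k" "int (a i) - int (a p) = d" "int (a k) - int (a i) = d" "d \<noteq> 0"
  shows "has_AP_subseq a 3 d"
proof -
  define idx where "idx = (\<lambda>m::nat. if m = 0 then p else if m = 1 then i else k)"
  have "strict_mono_on {..<3} idx"
    unfolding strict_mono_on_def idx_def using assms(1,2) by auto
  moreover have "\<forall>m. m + 1 < 3 \<longrightarrow> int (a (idx (m + 1))) - int (a (idx m)) = d"
  proof (intro allI impI)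
    fix m :: nat assume "m + 1 < 3"
    then have "m = 0 \<or> m = 1" by auto
    then show "int (a (idx (m + 1))) - int (a (idx m)) = d"
      using assms(3,4) unfolding idx_def by auto
  qed
  ultimately show ?thesis unfolding has_AP_subseq_def using assms(5) by blast
qed

theorem theorem2:
  fixes a :: "nat \<Rightarrow> nat"
  assumes "perm_pos a"
  shows "\<exists>d :: int. odd d \<and> has_AP_subseq a 3 d"
proof (rule ccontr)
  assume nAP: "\<not> (\<exists>d :: int. odd d \<and> has_AP_subseq a 3 d)"
  have bij: "bij_betw a UNIV {1..}" using assms unfolding perm_pos_def .
  have surj: "\<And>n. n \<ge> 1 \<Longrightarrow> \<exists>i. a i = n"
    using bij unfolding bij_betw_def by (metis atLeast_iff rangeE)
  have inj: "inj a" using bij unfolding bij_betw_def by simp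
  have pos: "\<And>i. a i \<ge> 1" using bij unfolding bij_betw_def by auto
  obtain p1 where p1: "a p1 = 1" using surj by auto
  obtain p2 where p2: "a p2 = 2" using surj by fastforce
  define M where "M = max p1 p2"
  define F where "F = a ` {..M}"
  have finF: "finite F" unfolding F_def by simp
  have p1F: "1 \<le> Max F" using finF p1 unfolding F_def M_def
    by (metis Max_ge atMost_iff image_eqI max.cobounded1)
  have p2F: "2 \<le> Max F" using finF p2 unfolding F_def M_def
    by (metis Max_ge atMost_iff image_eqI max.cobounded2)
  obtain j0 where "a j0 = Max F + 1" using surj by auto
  then have ex: "\<exists>i. a i > Max F" by (intro exI[of _ j0]) simp
  define i where "i = (LEAST i. a i > Max F)"
  have ai: "a i > Max F" unfolding i_def by (rule LeastI_ex[OF ex])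
  have imin: "\<And>k. a k > Max F \<Longrightarrow> i \<le> k" unfolding i_def by (rule Least_le)
  have iM: "i > M"
  proof (rule ccontr)
    assume "\<not> M < i"
    then have "a i \<in> F" unfolding F_def by simp
    then show False using ai finF Max_ge not_le by blast
  qed
  have pi1: "p1 < i" "p2 < i" using iM unfolding M_def by auto
  have v3: "a i \<ge> 3" using ai p2F by simp
  show False
  proof (cases "even (a i)")
    case True
    obtain k where k: "a k = 2 * a i - 1" proof -
      have "2 * a i - 1 \<ge> 1" using v3 by simp
      then show ?thesis using surj[of "2 * a i - 1"] that by blast
    qed
    have "k \<noteq> i" using k v3 by auto
    show False
    proof (cases "i < k")
      case True
      have "has_AP_subseq a 3 (int (a i) - 1)"
        by (rule ap3[OF pi1(1) True]) (use p1 k v3 in auto)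
      moreover have "odd (int (a i) - 1)" using \<open>even (a i)\<close> v3 by simp
      ultimately show False using nAP by blast
    next
      case False
      then have "k < i" using \<open>k \<noteq> i\<close> by simp
      moreover have "a k > Max F" using k ai v3 by simp
      ultimately show False using imin by fastforce
    qed
  next
    case False
    obtain k where k: "a k = 2 * a i - 2" proof -
      have "2 * a i - 2 \<ge> 1" using v3 by simp
      then show ?thesis using surj[of "2 * a i - 2"] that by blast
    qed
    have "k \<noteq> i" using k v3 by auto
    show False
    proof (cases "i < k")
      case True
      have "has_AP_subseq a 3 (int (a i) - 2)"
        by (rule ap3[OF pi1(2) True]) (use p2 k v3 in auto)
      moreover have "odd (int (a i) - 2)" using False v3 by simp
      ultimately show False using nAP by blast
    next
      case False
      then have "k < i" using \<open>k \<noteq> i\<close> by simp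
      moreover have "a k > Max F" using k ai v3 by simp
      ultimately show False using imin by fastforce
    qed
  qed
qed

end
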